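(* Let $\pi\colon (X,T)\to (Y,S)$ be a proximal extension between minimal systems, let $\ell\geq 1$, and let $R\subset\mathbb N$ be a set of $\ell$-recurrence for $(Y,S)$. Then $R$ is a set of $\ell$-recurrence for $(X,T)$.
   Context: A system is a compact metric space with a homeomorphism; minimal means no proper nonempty closed invariant subset. A factor map is a continuous surjection intertwining the maps. Points $x,x'$ are proximal if $\inf_{n\in\mathbb N}d(T^nx,T^nx')=0$; $\pi$ is a proximal extension if each fiber $\pi^{-1}(\{y\})$ consists of pairwise proximal points. $R$ is a set of $\ell$-recurrence for a minimal system $(X,T)$ if for every nonempty open $U\subset X$ there is $n\in R$ with $U\cap T^{-n}U\cap\dots\cap T^{-\ell n}U\ne\emptyset$. *)

theory Defs
  imports "HOL-Analysis.Analysis"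
begin

definition tds :: "'a::metric_space set \<Rightarrow> ('a \<Rightarrow> 'a) \<Rightarrow> bool" where
  "tds X T \<longleftrightarrow> compact X \<and> X \<noteq> {} \<and> (\<exists>T'. homeomorphism X X T T')"

definition minimal_system :: "'a::metric_space set \<Rightarrow> ('a \<Rightarrow> 'a) \<Rightarrow> bool" where
  "minimal_system X T \<longleftrightarrow> tds X T \<and>
     (\<forall>A. A \<subseteq> X \<longrightarrow> closed A \<longrightarrow> A \<noteq> {} \<longrightarrow> T ` A \<subseteq> A \<longrightarrow> A = X)"

definition factor_map :: "'a::metric_space set \<Rightarrow> ('a \<Rightarrow> 'a) \<Rightarrow> 'b::metric_space set \<Rightarrow> ('b \<Rightarrow> 'b) \<Rightarrow> ('a \<Rightarrow> 'b) \<Rightarrow> bool" where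
  "factor_map X T Y S \<pi> \<longleftrightarrow> tds X T \<and> tds Y S \<and> continuous_on X \<pi> \<and> \<pi> ` X = Y \<and>
     (\<forall>x\<in>X. \<pi> (T x) = S (\<pi> x))"

definition proximal :: "('a::metric_space \<Rightarrow> 'a) \<Rightarrow> 'a \<Rightarrow> 'a \<Rightarrow> bool" where
  "proximal T x x' \<longleftrightarrow> (INF n::nat. dist ((T ^^ n) x) ((T ^^ n) x')) = 0"

definition proximal_extension :: "'a::metric_space set \<Rightarrow> ('a \<Rightarrow> 'a) \<Rightarrow> 'b::metric_space set \<Rightarrow> ('b \<Rightarrow> 'b) \<Rightarrow> ('a \<Rightarrow> 'b) \<Rightarrow> bool" where
  "proximal_extension X T Y S \<pi> \<longleftrightarrow> factor_map X T Y S \<pi> \<and>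
     (\<forall>x\<in>X. \<forall>x'\<in>X. \<pi> x = \<pi> x' \<longrightarrow> proximal T x x')"

definition recurrence_set :: "nat \<Rightarrow> nat set \<Rightarrow> 'a::metric_space set \<Rightarrow> ('a \<Rightarrow> 'a) \<Rightarrow> bool" where
  "recurrence_set l R X T \<longleftrightarrow>
     (\<forall>U. openin (top_of_set X) U \<longrightarrow> U \<noteq> {} \<longrightarrow>
        (\<exists>n\<in>R. \<exists>x\<in>X. \<forall>j\<in>{0..l}. (T ^^ (j * n)) x \<in> U))"

end

theory Submission
  imports Defs
begin

lemma fp_in: "T ` X \<subseteq> X \<Longrightarrow> x \<in> X \<Longrightarrow> (T ^^ n) x \<in> X"
  by (induction n) auto

lemma fp_cont: "continuous_on X T \<Longrightarrow> T ` X \<subseteq> X \<Longrightarrow> continuous_on X (T ^^ n)"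
proof (induction n)
  case 0 then show ?case by (simp add: continuous_on_id)
next
  case (Suc n)
  have "(T ^^ n) ` X \<subseteq> X" using fp_in[OF Suc.prems(2)] by auto
  then have "continuous_on X (T \<circ> (T ^^ n))"
    using Suc by (metis continuous_on_compose continuous_on_subset)
  then show ?case by simp
qed

lemma fp_equiv: "(\<forall>x\<in>X. \<pi> (T x) = S (\<pi> x)) \<Longrightarrow> T ` X \<subseteq> X \<Longrightarrow> x \<in> X
  \<Longrightarrow> \<pi> ((T ^^ n) x) = (S ^^ n) (\<pi> x)"
proof (induction n)
  case 0 then show ?case by simp
next
  case (Suc n)
  then show ?case using fp_in[OF Suc.prems(2,3), of n] by simp
qed

lemma fp_comm: "(T ^^ a) ((T ^^ b) x) = (T ^^ b) ((T ^^ a) x)"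
  by (metis add.commute comp_apply funpow_add)

lemma fp_add: "(T ^^ a) ((T ^^ b) x) = (T ^^ (a + b)) x"
  by (simp add: funpow_add)

lemma multi_subseq:
  fixes f :: "nat \<Rightarrow> nat \<Rightarrow> 'a::metric_space"
  assumes "compact X" "\<And>i j. j \<le> k \<Longrightarrow> f i j \<in> X"
  shows "\<exists>r a. strict_mono r \<and> (\<forall>j\<le>k. a j \<in> X \<and> (\<lambda>i. f (r i) j) \<longlonglongrightarrow> a j)"
  using assms(2)
proof (induction k)
  case 0
  have "\<forall>i. f i 0 \<in> X" using 0 by auto
  from seq_compactE[OF compact_imp_seq_compact[OF assms(1)] this]
  obtain l r where "l \<in> X" "strict_mono r" "((\<lambda>i. f i 0) \<circ> r) \<longlonglongrightarrow> l" by blast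
  then show ?case by (intro exI[of _ r] exI[of _ "\<lambda>_. l"]) (auto simp: comp_def)
next
  case (Suc k)
  then obtain r a where r: "strict_mono r" "\<forall>j\<le>k. a j \<in> X \<and> (\<lambda>i. f (r i) j) \<longlonglongrightarrow> a j"
    by auto
  have "\<forall>i. f (r i) (Suc k) \<in> X" using Suc.prems by auto
  from seq_compactE[OF compact_imp_seq_compact[OF assms(1)] this]
  obtain l r2 where l: "l \<in> X" "strict_mono r2" "((\<lambda>i. f (r i) (Suc k)) \<circ> r2) \<longlonglongrightarrow> l" by blast
  define a' where "a' = (\<lambda>j. if j \<le> k then a j else l)"
  have "strict_mono (r \<circ> r2)" using r(1) l(2) by (simp add: strict_mono_def)
  moreover have "\<forall>j\<le>Suc k. a' j \<in> X \<and> (\<lambda>i. f ((r \<circ> r2) i) j) \<longlonglongrightarrow> a' j"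
  proof (intro allI impI)
    fix j assume j: "j \<le> Suc k"
    show "a' j \<in> X \<and> (\<lambda>i. f ((r \<circ> r2) i) j) \<longlonglongrightarrow> a' j"
    proof (cases "j \<le> k")
      case True
      then have "((\<lambda>i. f (r i) j) \<circ> r2) \<longlonglongrightarrow> a j" using r(2) l(2) LIMSEQ_subseq_LIMSEQ by blast
      then show ?thesis using True r(2) by (simp add: a'_def comp_def)
    next
      case False
      then have "j = Suc k" using j by simp
      then show ?thesis using False l by (simp add: a'_def comp_def)
    qed
  qed
  ultimately show ?case by blast
qed

lemma prox_lt:
  assumes "proximal T x x'" "e > 0"
  shows "\<exists>p. dist ((T ^^ p) x) ((T ^^ p) x') < e"
proof -
  have "Inf (range (\<lambda>n. dist ((T ^^ n) x) ((T ^^ n) x'))) < e"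
    using assms unfolding proximal_def by simp
  from cInf_lessD[OF _ this] show ?thesis by auto
qed

lemma fin_prox:
  fixes T :: "'a::metric_space \<Rightarrow> 'a" and \<pi> :: "'a \<Rightarrow> 'b::metric_space"
    and k :: nat and a :: "nat \<Rightarrow> 'a" and e :: real
  assumes cX: "compact X" and TX: "T ` X \<subseteq> X" and cT: "continuous_on X T"
    and cpi: "continuous_on X \<pi>"
    and eq: "\<forall>x\<in>X. \<pi> (T x) = S (\<pi> x)"
    and prox: "\<forall>x\<in>X. \<forall>x'\<in>X. \<pi> x = \<pi> x' \<longrightarrow> proximal T x x'"
  shows "(\<forall>j\<le>k. a j \<in> X \<and> \<pi> (a j) = \<pi> (a 0)) \<Longrightarrow> e > 0 \<Longrightarrow>
     \<exists>m. \<forall>j\<le>k. dist ((T ^^ m) (a j)) ((T ^^ m) (a 0)) < e"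
proof (induction k arbitrary: e)
  case 0 then show ?case by (intro exI[of _ 0]) simp
next
  case (Suc k)
  have "\<forall>i. \<exists>m. \<forall>j\<le>k. dist ((T ^^ m) (a j)) ((T ^^ m) (a 0)) < inverse (real (Suc i))"
  proof
    fix i
    have "\<forall>j\<le>k. a j \<in> X \<and> \<pi> (a j) = \<pi> (a 0)" using Suc.prems(1) le_SucI by blast
    moreover have "inverse (real (Suc i)) > 0" by simp
    ultimately show "\<exists>m. \<forall>j\<le>k. dist ((T ^^ m) (a j)) ((T ^^ m) (a 0)) < inverse (real (Suc i))"
      by (rule Suc.IH)
  qed
  from choice[OF this] obtain m where m0: "\<forall>i. \<forall>j\<le>k. dist ((T ^^ m i) (a j)) ((T ^^ m i) (a 0)) < inverse (real (Suc i))"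
    by blast
  then have m: "\<And>i j. j \<le> k \<Longrightarrow> dist ((T ^^ m i) (a j)) ((T ^^ m i) (a 0)) < inverse (real (Suc i))"
    by blast
  have a0: "a 0 \<in> X" and ak: "a (Suc k) \<in> X" and pak: "\<pi> (a (Suc k)) = \<pi> (a 0)"
    using Suc.prems(1) by blast+
  define f :: "nat \<Rightarrow> nat \<Rightarrow> 'a" where "f = (\<lambda>i j. if j = 0 then (T ^^ m i) (a 0) else (T ^^ m i) (a (Suc k)))"
  have fX: "\<And>i j. f i j \<in> X" unfolding f_def using fp_in[OF TX] a0 ak by auto
  obtain r b where r: "strict_mono r" and b: "\<forall>j\<le>1. b j \<in> X \<and> (\<lambda>i. f (r i) j) \<longlonglongrightarrow> b j"
    using multi_subseq[OF cX, where f=f and k=1] fX by blast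
  have b0: "b 0 \<in> X" "(\<lambda>i. f (r i) 0) \<longlonglongrightarrow> b 0" and b1: "b 1 \<in> X" "(\<lambda>i. f (r i) 1) \<longlonglongrightarrow> b 1"
    using b by auto
  have pf: "\<And>i. \<pi> (f i 0) = \<pi> (f i 1)"
    unfolding f_def using fp_equiv[OF eq TX] a0 ak pak by simp
  have l0: "(\<lambda>i. \<pi> (f (r i) 0)) \<longlonglongrightarrow> \<pi> (b 0)"
    by (rule continuous_on_tendsto_compose[OF cpi b0(2) b0(1)]) (simp add: fX)
  have l1: "(\<lambda>i. \<pi> (f (r i) 0)) \<longlonglongrightarrow> \<pi> (b 1)"
    unfolding pf by (rule continuous_on_tendsto_compose[OF cpi b1(2) b1(1)]) (simp add: fX)
  have "\<pi> (b 0) = \<pi> (b 1)" using LIMSEQ_unique[OF l0 l1] .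
  then have "proximal T (b 0) (b 1)" using prox b0 b1 by auto
  then obtain p where p: "dist ((T ^^ p) (b 0)) ((T ^^ p) (b 1)) < Suc k * 0 + e / 3"
    using prox_lt[of T "b 0" "b 1" "e/3"] Suc.prems(2) by auto
  have cp: "continuous_on X (T ^^ p)" using fp_cont[OF cT TX] .
  have cpi': "\<forall>x\<in>X. \<forall>e>0. \<exists>d>0. \<forall>x'\<in>X. dist x' x < d \<longrightarrow> dist ((T ^^ p) x') ((T ^^ p) x) < e"
    using cp unfolding continuous_on_iff by blast
  have e3: "e / 3 > 0" using Suc.prems(2) by simp
  obtain d1 where d1: "d1 > 0" "\<And>x'. x' \<in> X \<Longrightarrow> dist x' (b 0) < d1 \<Longrightarrow> dist ((T ^^ p) x') ((T ^^ p) (b 0)) < e / 3"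
    using cpi' b0(1) e3 by blast
  obtain d2 where d2: "d2 > 0" "\<And>x'. x' \<in> X \<Longrightarrow> dist x' (b 1) < d2 \<Longrightarrow> dist ((T ^^ p) x') ((T ^^ p) (b 1)) < e / 3"
    using cpi' b1(1) e3 by blast
  obtain n0 where n0: "inverse (real (Suc n0)) < d1 / 2"
    using reals_Archimedean[of "d1/2"] d1(1) by auto
  have ev: "eventually (\<lambda>i. dist (f (r i) 0) (b 0) < d1 / 2 \<and> dist (f (r i) 1) (b 1) < d2 \<and> i \<ge> n0) sequentially"
  proof (intro eventually_conj)
    show "eventually (\<lambda>i. dist (f (r i) 0) (b 0) < d1 / 2) sequentially"
      using b0(2) d1(1) unfolding tendsto_iff by (meson half_gt_zero)
    show "eventually (\<lambda>i. dist (f (r i) 1) (b 1) < d2) sequentially"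
      using b1(2) d2(1) unfolding tendsto_iff by blast
    show "eventually (\<lambda>i. i \<ge> n0) sequentially" by (rule eventually_ge_at_top)
  qed
  then obtain i where i: "dist (f (r i) 0) (b 0) < d1 / 2" "dist (f (r i) 1) (b 1) < d2" "i \<ge> n0"
    using eventually_sequentially by auto
  have ri: "r i \<ge> n0" using i(3) seq_suble[OF r] order_trans by blast
  have inv: "inverse (real (Suc (r i))) < d1 / 2"
  proof -
    have "inverse (real (Suc (r i))) \<le> inverse (real (Suc n0))"
      using ri by (simp add: le_imp_inverse_le)
    then show ?thesis using n0 by linarith
  qed
  define M where "M = p + m (r i)"
  have A: "dist ((T ^^ M) (a j)) ((T ^^ p) (b 0)) < e / 3" if "j \<le> k" for j
  proof -
    have xin: "(T ^^ m (r i)) (a j) \<in> X" using fp_in[OF TX] Suc.prems(1) that le_SucI by blast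
    have "dist ((T ^^ m (r i)) (a j)) (b 0) \<le> dist ((T ^^ m (r i)) (a j)) ((T ^^ m (r i)) (a 0)) + dist ((T ^^ m (r i)) (a 0)) (b 0)"
      by (rule dist_triangle)
    also have "\<dots> < d1" using m[OF that, of "r i"] inv i(1) unfolding f_def by simp
    finally have "dist ((T ^^ p) ((T ^^ m (r i)) (a j))) ((T ^^ p) (b 0)) < e / 3"
      using d1(2) xin by blast
    then show ?thesis unfolding M_def fp_add .
  qed
  have B: "dist ((T ^^ M) (a (Suc k))) ((T ^^ p) (b 1)) < e / 3"
  proof -
    have xin: "(T ^^ m (r i)) (a (Suc k)) \<in> X" using fp_in[OF TX] ak by auto
    have "dist ((T ^^ p) ((T ^^ m (r i)) (a (Suc k)))) ((T ^^ p) (b 1)) < e / 3"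
      using d2(2) xin i(2) unfolding f_def by simp
    then show ?thesis unfolding M_def fp_add .
  qed
  have "\<forall>j\<le>Suc k. dist ((T ^^ M) (a j)) ((T ^^ M) (a 0)) < e"
  proof (intro allI impI)
    fix j assume j: "j \<le> Suc k"
    have A0: "dist ((T ^^ M) (a 0)) ((T ^^ p) (b 0)) < e / 3" using A[of 0] by simp
    show "dist ((T ^^ M) (a j)) ((T ^^ M) (a 0)) < e"
    proof (cases "j \<le> k")
      case True
      have "dist ((T ^^ M) (a j)) ((T ^^ M) (a 0)) \<le> dist ((T ^^ M) (a j)) ((T ^^ p) (b 0)) + dist ((T ^^ M) (a 0)) ((T ^^ p) (b 0))"
        by (rule dist_triangle2)
      then show ?thesis using A[OF True] A0 Suc.prems(2) by linarith
    next
      case False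
      then have jj: "j = Suc k" using j by simp
      have "dist ((T ^^ M) (a j)) ((T ^^ M) (a 0)) \<le> dist ((T ^^ M) (a j)) ((T ^^ p) (b 1)) + dist ((T ^^ p) (b 1)) ((T ^^ M) (a 0))"
        by (rule dist_triangle)
      also have "\<dots> \<le> dist ((T ^^ M) (a j)) ((T ^^ p) (b 1)) + (dist ((T ^^ p) (b 1)) ((T ^^ p) (b 0)) + dist ((T ^^ p) (b 0)) ((T ^^ M) (a 0)))"
        using dist_triangle by (simp add: add_left_mono)
      finally show ?thesis using B p A0 jj Suc.prems(2) by (simp add: dist_commute)
    qed
  qed
  then show ?case by blast
qed

lemma lift_rec:
  fixes T :: "'a::metric_space \<Rightarrow> 'a" and \<pi> :: "'a \<Rightarrow> 'b::metric_space"
  assumes cX: "compact X" and TX: "T ` X \<subseteq> X"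
    and cpi: "continuous_on X \<pi>"
    and eq: "\<forall>x\<in>X. \<pi> (T x) = S (\<pi> x)"
    and piX: "\<pi> ` X = Y"
    and rec: "recurrence_set l R Y S"
    and y: "y \<in> Y"
  shows "\<exists>a. (\<forall>j\<le>l. a j \<in> X \<and> \<pi> (a j) = y) \<and>
     (\<forall>\<epsilon>>0. \<exists>n\<in>R. \<exists>z\<in>X. \<forall>j\<le>l. dist ((T ^^ (j * n)) z) (a j) < \<epsilon>)"
proof -
  have "\<forall>i. \<exists>n\<in>R. \<exists>w\<in>Y. \<forall>j\<in>{0..l}. (S ^^ (j * n)) w \<in> Y \<inter> ball y (inverse (real (Suc i)))"
  proof
    fix i
    have "openin (top_of_set Y) (Y \<inter> ball y (inverse (real (Suc i))))" by auto
    moreover have "Y \<inter> ball y (inverse (real (Suc i))) \<noteq> {}" using y by auto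
    ultimately show "\<exists>n\<in>R. \<exists>w\<in>Y. \<forall>j\<in>{0..l}. (S ^^ (j * n)) w \<in> Y \<inter> ball y (inverse (real (Suc i)))"
      using rec unfolding recurrence_set_def by blast
  qed
  then have "\<forall>i. \<exists>nw. fst nw \<in> R \<and> snd nw \<in> Y \<and> (\<forall>j\<in>{0..l}. (S ^^ (j * fst nw)) (snd nw) \<in> Y \<inter> ball y (inverse (real (Suc i))))"
    by force
  from choice[OF this] obtain nw where nw: "\<forall>i. fst (nw i) \<in> R \<and> snd (nw i) \<in> Y \<and> (\<forall>j\<in>{0..l}. (S ^^ (j * fst (nw i))) (snd (nw i)) \<in> Y \<inter> ball y (inverse (real (Suc i))))"
    by blast
  define n where "n = (\<lambda>i. fst (nw i))"
  define w where "w = (\<lambda>i. snd (nw i))"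
  have nwi: "n i \<in> R \<and> w i \<in> Y \<and> (\<forall>j\<in>{0..l}. (S ^^ (j * n i)) (w i) \<in> Y \<inter> ball y (inverse (real (Suc i))))" for i
    unfolding n_def w_def by (rule spec[OF nw])
  have nR: "\<And>i. n i \<in> R" using nwi by (rule conjunct1)
  have wY: "\<And>i. w i \<in> Y" using nwi by (metis (no_types))
  have wb: "dist y ((S ^^ (j * n i)) (w i)) < inverse (real (Suc i))" if "j \<le> l" for i j
  proof -
    have "j \<in> {0..l}" using that by simp
    then have "(S ^^ (j * n i)) (w i) \<in> ball y (inverse (real (Suc i)))"
      using nwi[of i] by (metis (no_types) IntD2)
    then show ?thesis by (simp add: mem_ball)
  qed
  have "\<forall>i. \<exists>z. z \<in> X \<and> \<pi> z = w i"
  proof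
    fix i
    have "w i \<in> \<pi> ` X" using wY[of i] piX by simp
    then obtain x where "x \<in> X" "w i = \<pi> x" by (rule imageE)
    then show "\<exists>z. z \<in> X \<and> \<pi> z = w i" by metis
  qed
  from choice[OF this] obtain z where z: "\<And>i. z i \<in> X" "\<And>i. \<pi> (z i) = w i" by blast
  define f :: "nat \<Rightarrow> nat \<Rightarrow> 'a" where "f = (\<lambda>i j. (T ^^ (j * n i)) (z i))"
  have fX: "\<And>i j. f i j \<in> X" unfolding f_def using fp_in[OF TX] z(1) by auto
  have pf: "\<And>i j. \<pi> (f i j) = (S ^^ (j * n i)) (w i)"
    unfolding f_def using fp_equiv[OF eq TX z(1)] z(2) by simp
  obtain r a where r: "strict_mono r" and ra: "\<forall>j\<le>l. a j \<in> X \<and> (\<lambda>i. f (r i) j) \<longlonglongrightarrow> a j"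
    using multi_subseq[OF cX, where f=f and k=l] fX by blast
  have pa: "\<pi> (a j) = y" if j: "j \<le> l" for j
  proof -
    have aX: "a j \<in> X" and la: "(\<lambda>i. f (r i) j) \<longlonglongrightarrow> a j" using ra j by auto
    have l1: "(\<lambda>i. \<pi> (f (r i) j)) \<longlonglongrightarrow> \<pi> (a j)"
      by (rule continuous_on_tendsto_compose[OF cpi la aX]) (simp add: fX)
    have l2: "(\<lambda>i. \<pi> (f (r i) j)) \<longlonglongrightarrow> y"
      unfolding tendsto_iff
    proof (intro allI impI)
      fix e :: real assume e: "e > 0"
      obtain N where N: "inverse (real (Suc N)) < e" using reals_Archimedean[OF e] by auto
      show "eventually (\<lambda>i. dist (\<pi> (f (r i) j)) y < e) sequentially"
        unfolding eventually_sequentially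
      proof (intro exI allI impI)
        fix i assume i: "i \<ge> N"
        have "r i \<ge> N" using i seq_suble[OF r] order_trans by blast
        then have "inverse (real (Suc (r i))) \<le> inverse (real (Suc N))"
          by (simp add: le_imp_inverse_le)
        moreover have "dist y (\<pi> (f (r i) j)) < inverse (real (Suc (r i)))"
          using wb[OF j] pf by simp
        ultimately have "dist y (\<pi> (f (r i) j)) < e" using N by linarith
        then show "dist (\<pi> (f (r i) j)) y < e" by (simp add: dist_commute)
      qed
    qed
    show ?thesis using LIMSEQ_unique[OF l1 l2] .
  qed
  have approx: "\<exists>n\<in>R. \<exists>z\<in>X. \<forall>j\<le>l. dist ((T ^^ (j * n)) z) (a j) < \<epsilon>" if e: "\<epsilon> > 0" for \<epsilon>
  proof -
    have "\<forall>j\<in>{..l}. eventually (\<lambda>i. dist (f (r i) j) (a j) < \<epsilon>) sequentially"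
    proof
      fix j assume j: "j \<in> {..l}"
      have "(\<lambda>i. f (r i) j) \<longlonglongrightarrow> a j" using ra j by simp
      then show "eventually (\<lambda>i. dist (f (r i) j) (a j) < \<epsilon>) sequentially"
        using tendsto_iff[THEN iffD1] e by blast
    qed
    then have "eventually (\<lambda>i. \<forall>j\<in>{..l}. dist (f (r i) j) (a j) < \<epsilon>) sequentially"
      by (rule eventually_ball_finite[rotated]) simp
    then obtain N where "\<forall>i\<ge>N. \<forall>j\<in>{..l}. dist (f (r i) j) (a j) < \<epsilon>"
      unfolding eventually_sequentially by blast
    then have "\<forall>j\<le>l. dist ((T ^^ (j * n (r N))) (z (r N))) (a j) < \<epsilon>"
      unfolding f_def by simp
    then show ?thesis using nR z(1) by blast
  qed
  show ?thesis
    by (rule exI[of _ a]) (use ra pa approx in blast)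
qed

lemma rec_from_approx:
  fixes T :: "'a::metric_space \<Rightarrow> 'a"
  assumes min: "minimal_system X T"
    and H: "\<forall>\<delta>>0. \<exists>n\<in>R. \<exists>z\<in>X. \<forall>j\<le>l. dist ((T ^^ (j * n)) z) z < \<delta>"
  shows "recurrence_set l R X T"
proof -
  have cX: "compact X" using min unfolding minimal_system_def tds_def by blast
  obtain T' where hom: "homeomorphism X X T T'" using min unfolding minimal_system_def tds_def by blast
  have TX: "T ` X \<subseteq> X" and cT: "continuous_on X T" using hom unfolding homeomorphism_def by auto
  have minA: "\<And>A. A \<subseteq> X \<Longrightarrow> closed A \<Longrightarrow> A \<noteq> {} \<Longrightarrow> T ` A \<subseteq> A \<Longrightarrow> A = X"
    using min unfolding minimal_system_def by blast
  have clX: "closed X" using cX by (rule compact_imp_closed)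
  show ?thesis unfolding recurrence_set_def
  proof (intro allI impI)
    fix U assume oU: "openin (top_of_set X) U" and Une: "U \<noteq> {}"
    obtain x0 where x0: "x0 \<in> U" using Une by blast
    have UX: "U \<subseteq> X" and "\<exists>e>0. \<forall>x'\<in>X. dist x' x0 < e \<longrightarrow> x' \<in> U"
      using oU x0 unfolding openin_euclidean_subtopology_iff by blast+
    then obtain e where e: "e > 0" "\<And>x'. x' \<in> X \<Longrightarrow> dist x' x0 < e \<Longrightarrow> x' \<in> U" by blast
    define \<epsilon> where "\<epsilon> = e / 2"
    have \<epsilon>: "\<epsilon> > 0" using e(1) unfolding \<epsilon>_def by simp
    have x0X: "x0 \<in> X" using x0 UX by blast
    have dense: "\<exists>m. dist ((T ^^ m) z) x0 < \<epsilon>" if z: "z \<in> X" for z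
    proof -
      define Orb where "Orb = range (\<lambda>m. (T ^^ m) z)"
      have OX: "Orb \<subseteq> X" unfolding Orb_def using fp_in[OF TX z] by blast
      have AX: "closure Orb \<subseteq> X" using closure_minimal[OF OX clX] .
      have Ane: "closure Orb \<noteq> {}" using closure_subset[of Orb] unfolding Orb_def by blast
      have "T ` Orb \<subseteq> closure Orb"
      proof
        fix u assume "u \<in> T ` Orb"
        then obtain m where "u = T ((T ^^ m) z)" unfolding Orb_def by blast
        then have "u = (T ^^ Suc m) z" by simp
        then have "u \<in> Orb" unfolding Orb_def by (rule range_eqI)
        then show "u \<in> closure Orb" using closure_subset by blast
      qed
      then have "T ` closure Orb \<subseteq> closure Orb"
        by (rule image_closure_subset[OF continuous_on_subset[OF cT AX] closed_closure])
      then have "closure Orb = X" using minA[OF AX _ Ane] by blast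
      then have "x0 \<in> closure Orb" using x0X by simp
      then obtain u where "u \<in> Orb" "dist u x0 < \<epsilon>" using \<epsilon> unfolding closure_approachable by blast
      then show ?thesis unfolding Orb_def by blast
    qed
    have "\<forall>m. \<exists>G. open G \<and> G \<inter> X = (T ^^ m) -` ball x0 \<epsilon> \<inter> X"
    proof
      fix m
      have "continuous_on X (T ^^ m)" by (rule fp_cont[OF cT TX])
      then show "\<exists>G. open G \<and> G \<inter> X = (T ^^ m) -` ball x0 \<epsilon> \<inter> X"
        unfolding continuous_on_open_invariant using open_ball by blast
    qed
    from choice[OF this] obtain G where G: "\<And>m. open (G m)" "\<And>m. G m \<inter> X = (T ^^ m) -` ball x0 \<epsilon> \<inter> X"
      by blast
    have cover: "X \<subseteq> (\<Union>m\<in>UNIV. G m)"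
    proof
      fix z assume z: "z \<in> X"
      obtain m where "dist ((T ^^ m) z) x0 < \<epsilon>" using dense[OF z] by blast
      then have "z \<in> (T ^^ m) -` ball x0 \<epsilon> \<inter> X" using z by (simp add: dist_commute)
      then have "z \<in> G m" using G(2)[of m] by blast
      then show "z \<in> (\<Union>m\<in>UNIV. G m)" by blast
    qed
    obtain M where M: "finite M" "X \<subseteq> (\<Union>m\<in>M. G m)"
    proof (rule compactE_image[OF cX, where C=UNIV and f=G])
      show "\<And>T. T \<in> UNIV \<Longrightarrow> open (G T)" by (rule G(1))
      show "X \<subseteq> (\<Union>c\<in>UNIV. G c)" by (rule cover)
      fix C' assume "C' \<subseteq> UNIV" "finite C'" "X \<subseteq> (\<Union>c\<in>C'. G c)"
      then show thesis using that by blast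
    qed
    have "\<forall>m. \<exists>d>0. \<forall>u\<in>X. \<forall>v\<in>X. dist v u < d \<longrightarrow> dist ((T ^^ m) v) ((T ^^ m) u) < \<epsilon>"
    proof
      fix m
      have "uniformly_continuous_on X (T ^^ m)"
        by (rule compact_uniformly_continuous[OF fp_cont[OF cT TX] cX])
      then show "\<exists>d>0. \<forall>u\<in>X. \<forall>v\<in>X. dist v u < d \<longrightarrow> dist ((T ^^ m) v) ((T ^^ m) u) < \<epsilon>"
        unfolding uniformly_continuous_on_def using \<epsilon> by blast
    qed
    from choice[OF this] obtain d where d: "\<And>m. d m > 0"
      "\<And>m u v. u \<in> X \<Longrightarrow> v \<in> X \<Longrightarrow> dist v u < d m \<Longrightarrow> dist ((T ^^ m) v) ((T ^^ m) u) < \<epsilon>"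
      by blast
    define \<delta> where "\<delta> = Min (insert 1 (d ` M))"
    have fin: "finite (insert 1 (d ` M))" using M(1) by simp
    have \<delta>pos: "\<delta> > 0" unfolding \<delta>_def using Min_gr_iff[OF fin] d(1) by auto
    have \<delta>le: "\<And>m. m \<in> M \<Longrightarrow> \<delta> \<le> d m" unfolding \<delta>_def using Min_le[OF fin] by blast
    obtain n z where n: "n \<in> R" and z: "z \<in> X" and nz: "\<forall>j\<le>l. dist ((T ^^ (j * n)) z) z < \<delta>"
      using H \<delta>pos by blast
    obtain m where m: "m \<in> M" "z \<in> G m" using M(2) z by blast
    have Tmz: "dist ((T ^^ m) z) x0 < \<epsilon>" using G(2)[of m] m(2) z by (auto simp: dist_commute)
    define x where "x = (T ^^ m) z"
    have "\<forall>j\<in>{0..l}. (T ^^ (j * n)) x \<in> U"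
    proof
      fix j assume j: "j \<in> {0..l}"
      have zj: "(T ^^ (j * n)) z \<in> X" using fp_in[OF TX z] .
      have "dist ((T ^^ (j * n)) z) z < d m" using nz j \<delta>le[OF m(1)] by force
      then have "dist ((T ^^ m) ((T ^^ (j * n)) z)) ((T ^^ m) z) < \<epsilon>" using d(2)[OF z zj] by blast
      then have "dist ((T ^^ (j * n)) x) x0 < e"
        using Tmz dist_triangle[of "(T ^^ m) ((T ^^ (j * n)) z)" x0 "(T ^^ m) z"]
        unfolding x_def fp_comm[where T=T and a="j * n" and b=m] \<epsilon>_def by linarith
      moreover have "(T ^^ (j * n)) x \<in> X" unfolding x_def using fp_in[OF TX] z by blast
      ultimately show "(T ^^ (j * n)) x \<in> U" using e(2) by blast
    qed
    moreover have "x \<in> X" unfolding x_def using fp_in[OF TX z] .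
    ultimately show "\<exists>n\<in>R. \<exists>x\<in>X. \<forall>j\<in>{0..l}. (T ^^ (j * n)) x \<in> U" using n by blast
  qed
qed

theorem mainTheorem4:
  fixes X :: "'a::metric_space set" and T :: "'a \<Rightarrow> 'a"
    and Y :: "'b::metric_space set" and S :: "'b \<Rightarrow> 'b"
    and \<pi> :: "'a \<Rightarrow> 'b" and l :: nat and R :: "nat set"
  assumes "minimal_system X T" and "minimal_system Y S"
    and "proximal_extension X T Y S \<pi>"
    and "l \<ge> 1"
    and "recurrence_set l R Y S"
  shows "recurrence_set l R X T"
proof -
  have cX: "compact X" using assms(1) unfolding minimal_system_def tds_def by blast
  obtain T' where hom: "homeomorphism X X T T'" using assms(1) unfolding minimal_system_def tds_def by blast
  have TX: "T ` X \<subseteq> X" and cT: "continuous_on X T" using hom unfolding homeomorphism_def by auto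
  have fm: "factor_map X T Y S \<pi>" and prox: "\<forall>x\<in>X. \<forall>x'\<in>X. \<pi> x = \<pi> x' \<longrightarrow> proximal T x x'"
    using assms(3) unfolding proximal_extension_def by blast+
  have cpi: "continuous_on X \<pi>" and piX: "\<pi> ` X = Y" and eq: "\<forall>x\<in>X. \<pi> (T x) = S (\<pi> x)"
    using fm unfolding factor_map_def by blast+
  have "Y \<noteq> {}" using assms(2) unfolding minimal_system_def tds_def by blast
  then obtain y where y: "y \<in> Y" by blast
  obtain a where a: "\<forall>j\<le>l. a j \<in> X \<and> \<pi> (a j) = y"
    and ap: "\<forall>\<epsilon>>0. \<exists>n\<in>R. \<exists>z\<in>X. \<forall>j\<le>l. dist ((T ^^ (j * n)) z) (a j) < \<epsilon>"
    using lift_rec[OF cX TX cpi eq piX assms(5) y] by blast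
  have aX: "\<And>j. j \<le> l \<Longrightarrow> a j \<in> X" using a by blast
  have a0: "a 0 \<in> X" using aX by simp
  have H: "\<forall>\<delta>>0. \<exists>n\<in>R. \<exists>z\<in>X. \<forall>j\<le>l. dist ((T ^^ (j * n)) z) z < \<delta>"
  proof (intro allI impI)
    fix \<delta> :: real assume \<delta>: "\<delta> > 0"
    have d3: "\<delta> / 3 > 0" using \<delta> by simp
    have fib: "\<forall>j\<le>l. a j \<in> X \<and> \<pi> (a j) = \<pi> (a 0)"
    proof (intro allI impI)
      fix j assume "j \<le> l"
      then have "a j \<in> X \<and> \<pi> (a j) = y" using a by blast
      moreover have "\<pi> (a 0) = y" using a by blast
      ultimately show "a j \<in> X \<and> \<pi> (a j) = \<pi> (a 0)" by simp
    qed
    obtain m where m: "\<forall>j\<le>l. dist ((T ^^ m) (a j)) ((T ^^ m) (a 0)) < \<delta> / 3"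
      using fin_prox[OF cX TX cT cpi eq prox fib d3] by blast
    have "uniformly_continuous_on X (T ^^ m)"
      by (rule compact_uniformly_continuous[OF fp_cont[OF cT TX] cX])
    then obtain \<eta> where \<eta>: "\<eta> > 0" "\<forall>u\<in>X. \<forall>v\<in>X. dist v u < \<eta> \<longrightarrow> dist ((T ^^ m) v) ((T ^^ m) u) < \<delta> / 3"
      unfolding uniformly_continuous_on_def using d3 by blast
    obtain n z where n: "n \<in> R" and z: "z \<in> X" and nz: "\<forall>j\<le>l. dist ((T ^^ (j * n)) z) (a j) < \<eta>"
      using ap \<eta>(1) by blast
    have "\<forall>j\<le>l. dist ((T ^^ (j * n)) ((T ^^ m) z)) ((T ^^ m) z) < \<delta>"
    proof (intro allI impI)
      fix j assume j: "j \<le> l"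
      have zj: "(T ^^ (j * n)) z \<in> X" using fp_in[OF TX z] .
      have 1: "dist ((T ^^ m) ((T ^^ (j * n)) z)) ((T ^^ m) (a j)) < \<delta> / 3"
        using \<eta>(2) aX[OF j] zj nz j by blast
      have 2: "dist ((T ^^ m) (a j)) ((T ^^ m) (a 0)) < \<delta> / 3" using m j by blast
      have z0: "dist z (a 0) < \<eta>" using nz by (metis funpow_0 mult_0 zero_le)
      have 3: "dist ((T ^^ m) z) ((T ^^ m) (a 0)) < \<delta> / 3"
        using \<eta>(2) a0 z z0 by blast
      have "dist ((T ^^ m) ((T ^^ (j * n)) z)) ((T ^^ m) z)
          \<le> dist ((T ^^ m) ((T ^^ (j * n)) z)) ((T ^^ m) (a j)) + dist ((T ^^ m) (a j)) ((T ^^ m) z)"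
        by (rule dist_triangle)
      also have "\<dots> \<le> dist ((T ^^ m) ((T ^^ (j * n)) z)) ((T ^^ m) (a j)) + (dist ((T ^^ m) (a j)) ((T ^^ m) (a 0)) + dist ((T ^^ m) z) ((T ^^ m) (a 0)))"
        using dist_triangle2[of "(T ^^ m) (a j)" "(T ^^ m) z" "(T ^^ m) (a 0)"] by linarith
      finally have "dist ((T ^^ m) ((T ^^ (j * n)) z)) ((T ^^ m) z) < \<delta>" using 1 2 3 by linarith
      then show "dist ((T ^^ (j * n)) ((T ^^ m) z)) ((T ^^ m) z) < \<delta>"
        by (simp add: fp_comm[where T=T and a="j * n" and b=m])
    qed
    moreover have "(T ^^ m) z \<in> X" using fp_in[OF TX z] .
    ultimately show "\<exists>n\<in>R. \<exists>z\<in>X. \<forall>j\<le>l. dist ((T ^^ (j * n)) z) z < \<delta>" using n by blast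
  qed
  show ?thesis by (rule rec_from_approx[OF assms(1) H])
qed

end
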